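(* Consider the two-stage robust problem $\min_{x\in\mathcal X}c_1x+\max_{u\in\mathcal U(x)}\min_{y\in\mathcal Y(x)}\hat c_2(u)y$, where $\mathcal U(x)=\{u\in\mathbb R^{n_u}_+: F(x)u\le h+Gx\}$ is nonempty and bounded for every $x\in\mathcal X$, $\mathcal Y(x)=\{y\in\mathbb R^{n_y}_+: B_2y\ge d-B_1x\}$ and $\hat c_2(u)=(\hat Eu)^\intercal+c_2$. It is equivalent to $\min_{x\in\mathcal X,\ y\in\mathcal Y(x)}c_1x+c_2y+\max_{u\in\mathcal U(x)}(\hat Eu)^\intercal y$, which is further equivalent to the single-level problem $\min\{c_1x+c_2y+(h+Gx)^\intercal\lambda:\ x\in\mathcal X,\ y\in\mathcal Y(x),\ F(x)^\intercal\lambda-\hat E^\intercal y\ge 0,\ \lambda\ge 0\}$.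
   Context: $\mathcal X=\{x\in\mathbb Z^{m_x}_+\times\mathbb R^{n_x}_+: Ax\ge b\}$; $F(x)$ is a matrix depending on $x$. The optimal value of an infeasible minimization problem is $+\infty$. Assume the mixed integer program $\min\{c_1x+\hat c_2(u)y: x\in\mathcal X,u\in\mathcal U(x),y\in\mathcal Y(x)\}$ has a finite optimal value (in particular $\mathcal Y(x)\neq\emptyset$ for some $x\in\mathcal X$). Two formulations are called equivalent if they have the same optimal value and any optimal first-stage solution of one is optimal for the other, and vice versa. *)

theory Defs
  imports "HOL-Analysis.Analysis"
begin

text \<open>Vectors are elements of real^'n; the order on vectors is the library's
componentwise order. Matrices are real^'cols^'rows, applied with *v.\<close>

definition Xset :: "real^'x^'a \<Rightarrow> real^'a \<Rightarrow> 'x set \<Rightarrow> (real^'x) set" where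
  "Xset A b Iint = {x. 0 \<le> x \<and> (\<forall>i\<in>Iint. x $ i \<in> \<int>) \<and> b \<le> A *v x}"

definition Uset :: "(real^'x \<Rightarrow> real^'u^'f) \<Rightarrow> real^'f \<Rightarrow> real^'x^'f \<Rightarrow> real^'x \<Rightarrow> (real^'u) set" where
  "Uset F h G x = {u. 0 \<le> u \<and> F x *v u \<le> h + G *v x}"

definition Yset :: "real^'x^'b \<Rightarrow> real^'y^'b \<Rightarrow> real^'b \<Rightarrow> real^'x \<Rightarrow> (real^'y) set" where
  "Yset B1 B2 d x = {y. 0 \<le> y \<and> d - B1 *v x \<le> B2 *v y}"

text \<open>c2hat(u) = (E u)^T + c2, stored as a (column) vector; c2hat(u) y = c2hat u \<bullet> y.\<close>
definition c2hat :: "real^'u^'y \<Rightarrow> real^'y \<Rightarrow> real^'u \<Rightarrow> real^'y" where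
  "c2hat E c2 u = E *v u + c2"

text \<open>Optimal value of a minimisation problem (infeasible = +infinity).\<close>
definition optval :: "'p set \<Rightarrow> ('p \<Rightarrow> ereal) \<Rightarrow> ereal" where
  "optval S f = (INF p\<in>S. f p)"

text \<open>Feasible solutions are pairs (first-stage x, remaining variables z);
x is an optimal first-stage solution if it is part of an optimal solution.\<close>
definition fs_optimal :: "('x \<times> 'z) set \<Rightarrow> ('x \<times> 'z \<Rightarrow> ereal) \<Rightarrow> 'x \<Rightarrow> bool" where
  "fs_optimal S f x \<longleftrightarrow> (\<exists>z. (x, z) \<in> S \<and> f (x, z) = optval S f)"

definition equivalent_form ::
  "('x \<times> 'z) set \<Rightarrow> ('x \<times> 'z \<Rightarrow> ereal) \<Rightarrow> ('x \<times> 'w) set \<Rightarrow> ('x \<times> 'w \<Rightarrow> ereal) \<Rightarrow> bool" where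
  "equivalent_form S f T g \<longleftrightarrow>
     optval S f = optval T g \<and> (\<forall>x. fs_optimal S f x \<longleftrightarrow> fs_optimal T g x)"

end

theory Submission
  imports Defs
begin

lemma tr_dot: fixes A :: "real^'n^'m"
  shows "(transpose A *v l) \<bullet> u = l \<bullet> (A *v u)"
proof -
  have "(transpose A *v l) \<bullet> u = (\<Sum>j\<in>UNIV. \<Sum>i\<in>UNIV. A$i$j * l$i * u$j)"
    unfolding inner_vec_def matrix_vector_mult_def transpose_def
    by (simp add: sum_distrib_right)
  also have "\<dots> = (\<Sum>i\<in>UNIV. \<Sum>j\<in>UNIV. A$i$j * l$i * u$j)" by (rule sum.swap)
  also have "\<dots> = l \<bullet> (A *v u)"
    unfolding inner_vec_def matrix_vector_mult_def
    by (simp add: sum_distrib_left mult_ac)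
  finally show ?thesis .
qed

lemma tr_dot2: fixes A :: "real^'n^'m"
  shows "u \<bullet> (transpose A *v l) = l \<bullet> (A *v u)"
  using tr_dot[of A l u] by (simp only: inner_commute)

lemma dot_mono: fixes l :: "real^'n"
  shows "0 \<le> l \<Longrightarrow> x \<le> y \<Longrightarrow> l \<bullet> x \<le> l \<bullet> y"
  unfolding inner_vec_def less_eq_vec_def
  by (auto intro!: sum_mono mult_left_mono)

lemma vec_nonneg_dot: "0 \<le> (l::real^'n) \<Longrightarrow> 0 \<le> x \<Longrightarrow> 0 \<le> l \<bullet> x"
  unfolding inner_vec_def less_eq_vec_def
  by (auto intro!: sum_nonneg)

lemma axis_nonneg: "0 \<le> axis i (1::real)"
  by (simp add: less_eq_vec_def axis_def)

lemma lp_dual: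
  fixes A :: "real^'n^'m" and b :: "real^'m" and c :: "real^'n"
  assumes u0: "0 \<le> u0" "A *v u0 \<le> b"
    and bnd: "\<And>u. 0 \<le> u \<Longrightarrow> A *v u \<le> b \<Longrightarrow> c \<bullet> u \<le> M"
  shows "\<exists>l. 0 \<le> l \<and> c \<le> transpose A *v l \<and> b \<bullet> l \<le> M"
proof -
  define T where "T = {p. \<exists>l w r. 0 \<le> l \<and> 0 \<le> w \<and> 0 \<le> r \<and>
      p = (transpose A *v l - w, b \<bullet> l + r)}"
  define G where "G = range (\<lambda>i. (transpose A *v axis i 1, b $ i))
      \<union> range (\<lambda>j. (- axis j (1::real), 0::real)) \<union> {(0, 1)}"
  have finG: "finite G" unfolding G_def by simp
  have coneT: "convex_cone T"
    unfolding convex_cone_iff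
  proof (intro conjI ballI allI impI)
    show "0 \<in> T" unfolding T_def by (rule CollectI, rule exI[of _ 0], rule exI[of _ 0], rule exI[of _ 0]) (simp add: zero_prod_def)
  next
    fix x y assume "x \<in> T" "y \<in> T"
    then obtain l w r l' w' r' where 
      "0 \<le> l" "0 \<le> w" "0 \<le> r" "x = (transpose A *v l - w, b \<bullet> l + r)"
      "0 \<le> l'" "0 \<le> w'" "0 \<le> r'" "y = (transpose A *v l' - w', b \<bullet> l' + r')"
      unfolding T_def by blast
    then show "x + y \<in> T" unfolding T_def
      by (intro CollectI exI[of _ "l + l'"] exI[of _ "w + w'"] exI[of _ "r + r'"])
        (simp add: matrix_vector_right_distrib inner_add_right algebra_simps add_nonneg_nonneg)
  next
    fix x and c :: real assume "x \<in> T" "0 \<le> c"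
    then obtain l w r where 
      "0 \<le> l" "0 \<le> w" "0 \<le> r" "x = (transpose A *v l - w, b \<bullet> l + r)"
      unfolding T_def by blast
    then show "c *\<^sub>R x \<in> T" unfolding T_def using \<open>0 \<le> c\<close>
      by (intro CollectI exI[of _ "c *\<^sub>R l"] exI[of _ "c *\<^sub>R w"] exI[of _ "c * r"])
        (simp add: matrix_vector_mult_scaleR scaleR_diff_right less_eq_vec_def distrib_left)
  qed
  have GT: "G \<subseteq> T"
  proof -
    have "(transpose A *v axis i 1, b $ i) \<in> T" for i
      unfolding T_def
      by (intro CollectI exI[of _ "axis i 1"] exI[of _ 0] exI[of _ 0])
        (simp add: axis_nonneg inner_axis)
    moreover have "(- axis j (1::real), 0::real) \<in> T" for j
      unfolding T_def
      by (intro CollectI exI[of _ 0] exI[of _ "axis j 1"] exI[of _ 0])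
        (simp add: axis_nonneg)
    moreover have "(0, 1) \<in> T"
      unfolding T_def
      by (intro CollectI exI[of _ 0] exI[of _ 0] exI[of _ 1]) simp
    ultimately show ?thesis unfolding G_def by blast
  qed
  define K where "K = convex_cone hull G"
  have KT: "K \<subseteq> T" unfolding K_def using GT coneT by (simp add: hull_minimal)
  have "(c, M) \<in> K"
  proof (rule ccontr)
    assume nK: "(c, M) \<notin> K"
    have "convex K" "closed K" unfolding K_def
      using finG by (auto simp: convex_convex_cone_hull closed_convex_cone_hull)
    from separating_hyperplane_closed_point[OF this nK]
    obtain a \<beta> where a1: "a \<bullet> (c, M) < \<beta>" and a2: "\<forall>x\<in>K. \<beta> < a \<bullet> x" by blast
    have "0 \<in> K" unfolding K_def by (rule convex_cone_hull_contains_0)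
    with a2 have b0: "\<beta> < 0" by auto
    have aK: "0 \<le> a \<bullet> x" if "x \<in> K" for x
    proof (rule ccontr)
      assume "\<not> 0 \<le> a \<bullet> x"
      hence neg: "a \<bullet> x < 0" by simp
      define t where "t = \<beta> / (a \<bullet> x)"
      have "t \<ge> 0" unfolding t_def using neg b0 by (simp add: divide_nonpos_neg)
      hence "t *\<^sub>R x \<in> K" unfolding K_def using that unfolding K_def
        by (simp add: convex_cone_hull_mul)
      hence "\<beta> < a \<bullet> (t *\<^sub>R x)" using a2 by blast
      also have "a \<bullet> (t *\<^sub>R x) = \<beta>" unfolding t_def using neg by simp
      finally show False by simp
    qed
    obtain v \<sigma> where a_eq: "a = (v, \<sigma>)" by (cases a)
    have GK: "G \<subseteq> K" unfolding K_def by (rule hull_subset)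
    have g1: "0 \<le> (A *v v) $ i + \<sigma> * b $ i" for i
    proof -
      have "0 \<le> a \<bullet> (transpose A *v axis i 1, b $ i)" using aK GK unfolding G_def by blast
      thus ?thesis unfolding a_eq inner_Pair tr_dot2 inner_axis' by (simp add: mult.commute)
    qed
    have g2: "v $ j \<le> 0" for j
    proof -
      have "0 \<le> a \<bullet> (- axis j (1::real), 0::real)" using aK GK unfolding G_def by blast
      thus ?thesis unfolding a_eq by (simp add: inner_axis)
    qed
    have g3: "0 \<le> \<sigma>"
    proof -
      have "0 \<le> a \<bullet> ((0::real^'n), 1::real)" using aK GK unfolding G_def by blast
      thus ?thesis unfolding a_eq by simp
    qed
    have cv: "c \<bullet> v + \<sigma> * M < 0" using a1 b0 unfolding a_eq by (simp add: inner_commute mult.commute)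
    define u where "u = - v"
    have u_nn: "0 \<le> u" unfolding u_def less_eq_vec_def using g2 by simp
    have Au: "(A *v u) $ i \<le> \<sigma> * b $ i" for i
      proof -
      have "(A *v u) $ i = - (A *v v) $ i" unfolding u_def
        by (simp add: matrix_vector_mult_def sum_negf)
      thus ?thesis using g1[of i] by simp
    qed
    have cu: "\<sigma> * M < c \<bullet> u" using cv unfolding u_def by simp
    show False
    proof (cases "\<sigma> = 0")
      case True
      have Au0: "(A *v u) $ i \<le> 0" for i using Au[of i] True by simp
      have cu0: "0 < c \<bullet> u" using cu True by simp
      define t where "t = (M - c \<bullet> u0) / (c \<bullet> u) + 1"
      have Mc: "c \<bullet> u0 \<le> M" using bnd[OF u0] .
      have "t \<ge> 0" unfolding t_def using Mc cu0 by (simp add: add_nonneg_nonneg)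
      have tcu: "t * (c \<bullet> u) = M - c \<bullet> u0 + c \<bullet> u"
        unfolding t_def using cu0 by (simp add: distrib_right)
      have "0 \<le> u0 + t *\<^sub>R u" using u0 u_nn \<open>t \<ge> 0\<close>
        by (simp add: less_eq_vec_def)
      moreover have "A *v (u0 + t *\<^sub>R u) \<le> b" unfolding less_eq_vec_def
      proof
        fix i
        have "(A *v (u0 + t *\<^sub>R u))$i = (A *v u0)$i + t * (A *v u)$i"
          by (simp add: matrix_vector_right_distrib matrix_vector_mult_scaleR)
        moreover have "(A *v u0)$i \<le> b$i" using u0(2) by (simp add: less_eq_vec_def)
        moreover have "t * (A *v u)$i \<le> 0" using Au0[of i] \<open>t \<ge> 0\<close> by (simp add: mult_nonneg_nonpos)
        ultimately show "(A *v (u0 + t *\<^sub>R u))$i \<le> b$i" by linarith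
      qed
      ultimately have "c \<bullet> (u0 + t *\<^sub>R u) \<le> M" by (rule bnd)
      moreover have "c \<bullet> (u0 + t *\<^sub>R u) = c \<bullet> u0 + t * (c \<bullet> u)"
        by (simp add: inner_add_right)
      ultimately show False using cu0 tcu by linarith
    next
      case False
      hence sp: "\<sigma> > 0" using g3 by simp
      have "0 \<le> (1/\<sigma>) *\<^sub>R u" using u_nn sp by (simp add: less_eq_vec_def)
      moreover have "A *v ((1/\<sigma>) *\<^sub>R u) \<le> b" unfolding less_eq_vec_def
      proof
        fix i
        have "(A *v ((1/\<sigma>) *\<^sub>R u))$i = (A *v u)$i / \<sigma>"
          by (simp add: matrix_vector_mult_scaleR)
        also have "\<dots> \<le> b$i" using Au[of i] sp by (simp add: pos_divide_le_eq mult.commute)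
        finally show "(A *v ((1/\<sigma>) *\<^sub>R u))$i \<le> b$i" .
      qed
      ultimately have "c \<bullet> ((1/\<sigma>) *\<^sub>R u) \<le> M" by (rule bnd)
      hence "c \<bullet> u / \<sigma> \<le> M" by simp
      hence "c \<bullet> u \<le> \<sigma> * M" using sp by (simp add: pos_divide_le_eq mult.commute)
      thus False using cu by simp
    qed
  qed
  with KT have "(c, M) \<in> T" by blast
  then obtain l w r where lwr: "0 \<le> l" "0 \<le> w" "0 \<le> r" "c = transpose A *v l - w" "M = b \<bullet> l + r"
    unfolding T_def by blast
  show ?thesis
    using lwr by (intro exI[of _ l]) (auto simp: less_eq_vec_def)
qed

lemma weak_dual:
  fixes A :: "real^'n^'m"
  assumes "0 \<le> u" "A *v u \<le> b" "0 \<le> l" "c \<le> transpose A *v l"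
  shows "c \<bullet> u \<le> b \<bullet> l"
proof -
  have "c \<bullet> u = u \<bullet> c" by (simp add: inner_commute)
  also have "\<dots> \<le> u \<bullet> (transpose A *v l)" by (rule dot_mono[OF assms(1,4)])
  also have "\<dots> = l \<bullet> (A *v u)" by (rule tr_dot2)
  also have "\<dots> \<le> l \<bullet> b" by (rule dot_mono[OF assms(3,2)])
  finally show ?thesis by (simp add: inner_commute)
qed

lemma lp_attain:
  fixes A :: "real^'n^'m" and b :: "real^'m" and c :: "real^'n"
  assumes u0: "0 \<le> u0" "A *v u0 \<le> b"
    and bnd: "\<And>u. 0 \<le> u \<Longrightarrow> A *v u \<le> b \<Longrightarrow> c \<bullet> u \<le> M"
  shows "\<exists>u. 0 \<le> u \<and> A *v u \<le> b \<and> (\<forall>v. 0 \<le> v \<longrightarrow> A *v v \<le> b \<longrightarrow> c \<bullet> v \<le> c \<bullet> u)"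
proof -
  define V where "V = {c \<bullet> u | u. 0 \<le> u \<and> A *v u \<le> b}"
  have Vne: "V \<noteq> {}" using u0 unfolding V_def by blast
  have Vbdd: "bdd_above V" unfolding V_def bdd_above_def using bnd by blast
  define s where "s = Sup V"
  have sup1: "c \<bullet> v \<le> s" if "0 \<le> v" "A *v v \<le> b" for v
    unfolding s_def using that by (intro cSup_upper[OF _ Vbdd]) (auto simp: V_def)
  obtain l where l: "0 \<le> l" "c \<le> transpose A *v l" "b \<bullet> l \<le> s"
    using lp_dual[OF u0 sup1] by blast
  have dbnd: "(- b) \<bullet> l' \<le> - s" if "0 \<le> l'" "(- transpose A) *v l' \<le> - c" for l'
  proof -
    have "c \<le> transpose A *v l'" using that(2)
      by (simp add: less_eq_vec_def matrix_vector_mult_def sum_negf)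
    hence "\<forall>x\<in>V. x \<le> b \<bullet> l'" unfolding V_def using weak_dual that(1) by blast
    hence "s \<le> b \<bullet> l'" unfolding s_def using Vne by (intro cSup_least) auto
    thus ?thesis by simp
  qed
  have lf: "(- transpose A) *v l \<le> - c" using l(2)
    by (simp add: less_eq_vec_def matrix_vector_mult_def sum_negf)
  obtain u where u: "0 \<le> u" "- b \<le> transpose (- transpose A) *v u" "(- c) \<bullet> u \<le> - s"
    using lp_dual[OF l(1) lf dbnd] by blast
  have "A *v u \<le> b" using u(2)
    by (simp add: less_eq_vec_def matrix_vector_mult_def transpose_def sum_negf)
  moreover have "s \<le> c \<bullet> u" using u(3) by simp
  ultimately show ?thesis using u(1) sup1 by force
qed

declare transpose_matrix_vector[simp del]

definition join :: "real^'a \<Rightarrow> real^'b \<Rightarrow> real^('a + 'b)" where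
  "join y l = (\<chi> k. case k of Inl j \<Rightarrow> y $ j | Inr i \<Rightarrow> l $ i)"

lemma join_nth[simp]: "join y l $ Inl j = y $ j" "join y l $ Inr i = l $ i"
  by (simp_all add: join_def)

lemma join_split: "z = join (\<chi> j. z $ Inl j) (\<chi> i. z $ Inr i)"
  by (simp add: join_def vec_eq_iff split: sum.split)

lemma sum_UNIV_plus:
  "(\<Sum>s\<in>(UNIV::('a::finite + 'b::finite) set). f s) = (\<Sum>j\<in>UNIV. f (Inl j)) + (\<Sum>i\<in>UNIV. f (Inr i))"
  using sum.Plus[of "UNIV::'a set" "UNIV::'b set" f] by (simp add: comp_def)

lemma join_nonneg[simp]: "0 \<le> join y l \<longleftrightarrow> 0 \<le> y \<and> 0 \<le> l"
  by (auto simp: less_eq_vec_def join_def split: sum.split)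

lemma join_inner[simp]: "join a b \<bullet> join y l = a \<bullet> y + b \<bullet> l"
  by (simp add: inner_vec_def sum_UNIV_plus)

definition M1 :: "real^'u^'f \<Rightarrow> real^'y^'b \<Rightarrow> real^'u^'y \<Rightarrow> real^('y + 'f)^('b + 'u)" where
  "M1 F B2 E = (\<chi> r s. case r of
      Inl k \<Rightarrow> (case s of Inl j \<Rightarrow> - B2$k$j | Inr i \<Rightarrow> 0)
    | Inr m \<Rightarrow> (case s of Inl j \<Rightarrow> E$j$m | Inr i \<Rightarrow> - F$i$m))"

lemma M1_mult:
  "(M1 F B2 E *v join y l) $ Inl k = - (B2 *v y) $ k"
  "(M1 F B2 E *v join y l) $ Inr m = (transpose E *v y) $ m - (transpose F *v l) $ m"
  by (simp_all add: M1_def matrix_vector_mult_def transpose_def sum_UNIV_plus sum_negf sum_subtractf)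

lemma M1_tmult:
  "(transpose (M1 F B2 E) *v join mu u) $ Inl j = (E *v u) $ j - (transpose B2 *v mu) $ j"
  "(transpose (M1 F B2 E) *v join mu u) $ Inr i = - (F *v u) $ i"
  by (simp_all add: M1_def matrix_vector_mult_def transpose_def sum_UNIV_plus sum_negf sum_subtractf)

lemma all_plus: "(\<forall>s. P s) \<longleftrightarrow> (\<forall>k. P (Inl k)) \<and> (\<forall>m. P (Inr m))"
  by (metis sum.exhaust)

lemma join_le_iff: "join a b \<le> join y l \<longleftrightarrow> a \<le> y \<and> b \<le> l"
  by (auto simp: less_eq_vec_def join_def split: sum.split)

lemma K2:
  fixes F :: "real^'u^'f" and g :: "real^'f" and B2 :: "real^'y^'b" and dd :: "real^'b"
    and E :: "real^'u^'y" and c2 :: "real^'y"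
  assumes y0: "0 \<le> y0" "dd \<le> B2 *v y0"
    and l0: "0 \<le> l0" "transpose E *v y0 \<le> transpose F *v l0"
    and lb: "\<And>y l. 0 \<le> y \<Longrightarrow> dd \<le> B2 *v y \<Longrightarrow> 0 \<le> l \<Longrightarrow> transpose E *v y \<le> transpose F *v l
               \<Longrightarrow> L \<le> c2 \<bullet> y + g \<bullet> l"
  shows "\<exists>y l u. 0 \<le> y \<and> dd \<le> B2 *v y \<and> 0 \<le> l \<and> transpose E *v y \<le> transpose F *v l
     \<and> 0 \<le> u \<and> F *v u \<le> g
     \<and> (\<forall>y'. 0 \<le> y' \<longrightarrow> dd \<le> B2 *v y' \<longrightarrow> c2 \<bullet> y + g \<bullet> l \<le> (E *v u + c2) \<bullet> y')"
proof -
  define A where "A = M1 F B2 E"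
  define bb :: "real^('b + 'u)" where "bb = join (- dd) 0"
  define cc where "cc = join (- c2) (- g)"
  have feas: "A *v join y l \<le> bb \<longleftrightarrow> dd \<le> B2 *v y \<and> transpose E *v y \<le> transpose F *v l" for y l
    unfolding A_def bb_def less_eq_vec_def all_plus[where P="\<lambda>s. (M1 F B2 E *v join y l) $ s \<le> join (- dd) 0 $ s"]
    by (simp add: M1_mult)
  have obj: "cc \<bullet> join y l = - (c2 \<bullet> y + g \<bullet> l)" for y l
    unfolding cc_def by simp
  have bndz: "cc \<bullet> z \<le> - L" if "0 \<le> z" "A *v z \<le> bb" for z
  proof -
    have "z = join (\<chi> j. z $ Inl j) (\<chi> i. z $ Inr i)" by (rule join_split)
    then obtain y l where z: "z = join y l" by blast
    show ?thesis using that lb[of y l] unfolding z feas obj by simp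
  qed
  have z0: "0 \<le> join y0 l0" "A *v join y0 l0 \<le> bb" using y0 l0 feas by auto
  obtain z where z: "0 \<le> z" "A *v z \<le> bb" and zopt: "\<And>v. 0 \<le> v \<Longrightarrow> A *v v \<le> bb \<Longrightarrow> cc \<bullet> v \<le> cc \<bullet> z"
    using lp_attain[OF z0 bndz] by blast
  obtain ys ls where zs: "z = join ys ls" using join_split by blast
  obtain l' where l': "0 \<le> l'" "cc \<le> transpose A *v l'" "bb \<bullet> l' \<le> cc \<bullet> z"
    using lp_dual[OF z zopt] by blast
  obtain mu u where l'eq: "l' = join mu u" using join_split by blast
  have ys: "0 \<le> ys" "dd \<le> B2 *v ys" "0 \<le> ls" "transpose E *v ys \<le> transpose F *v ls"
    using z feas unfolding zs by auto
  have mu: "0 \<le> mu" "0 \<le> u" using l'(1) unfolding l'eq by auto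
  have c1: "(transpose B2 *v mu) $ j \<le> (E *v u + c2) $ j" for j
    using l'(2) unfolding less_eq_vec_def l'eq cc_def A_def
    by (auto dest!: spec[of _ "Inl j"] simp: M1_tmult)
  have c2': "(F *v u) $ i \<le> g $ i" for i
    using l'(2) unfolding less_eq_vec_def l'eq cc_def A_def
    by (auto dest!: spec[of _ "Inr i"] simp: M1_tmult)
  have val: "c2 \<bullet> ys + g \<bullet> ls \<le> mu \<bullet> dd"
    using l'(3) unfolding l'eq zs bb_def obj by (simp add: inner_commute)
  show ?thesis
  proof (intro exI conjI allI impI)
    show "0 \<le> ys" "dd \<le> B2 *v ys" "0 \<le> ls" "transpose E *v ys \<le> transpose F *v ls" by (fact ys)+
    show "0 \<le> u" by (fact mu)
    show "F *v u \<le> g" using c2' by (simp add: less_eq_vec_def)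
    fix y' :: "real^'y" assume y': "0 \<le> y'" "dd \<le> B2 *v y'"
    have "c2 \<bullet> ys + g \<bullet> ls \<le> mu \<bullet> dd" by (fact val)
    also have "\<dots> \<le> mu \<bullet> (B2 *v y')" by (rule dot_mono[OF mu(1) y'(2)])
    also have "\<dots> = y' \<bullet> (transpose B2 *v mu)" by (rule tr_dot2[symmetric])
    also have "\<dots> \<le> y' \<bullet> (E *v u + c2)" by (rule dot_mono[OF y'(1)]) (use c1 in \<open>simp add: less_eq_vec_def\<close>)
    finally show "c2 \<bullet> ys + g \<bullet> ls \<le> (E *v u + c2) \<bullet> y'" by (simp add: inner_commute)
  qed
qed

lemma equiv_lemma:
  assumes fin: "optval T g \<noteq> \<infinity>"
    and d1: "\<And>x z. (x, z) \<in> S \<Longrightarrow> f (x, z) \<noteq> \<infinity> \<Longrightarrow> \<exists>w. (x, w) \<in> T \<and> g (x, w) \<le> f (x, z)"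
    and d2: "\<And>x w. (x, w) \<in> T \<Longrightarrow> \<exists>z. (x, z) \<in> S \<and> f (x, z) \<le> g (x, w)"
  shows "equivalent_form S f T g"
proof -
  have le1: "optval T g \<le> optval S f" unfolding optval_def
  proof (rule INF_greatest)
    fix p assume p: "p \<in> S"
    obtain x z where pe: "p = (x, z)" by (cases p)
    show "(INF q\<in>T. g q) \<le> f p"
    proof (cases "f p = \<infinity>")
      case True thus ?thesis by simp
    next
      case False
      then obtain w where "(x, w) \<in> T" "g (x, w) \<le> f (x, z)" using d1 p unfolding pe by blast
      thus ?thesis unfolding pe by (meson INF_lower2)
    qed
  qed
  have le2: "optval S f \<le> optval T g" unfolding optval_def
  proof (rule INF_greatest)
    fix p assume p: "p \<in> T"
    obtain x w where pe: "p = (x, w)" by (cases p)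
    obtain z where "(x, z) \<in> S" "f (x, z) \<le> g (x, w)" using d2 p unfolding pe by blast
    thus "(INF q\<in>S. f q) \<le> g p" unfolding pe by (meson INF_lower2)
  qed
  have eq: "optval S f = optval T g" using le1 le2 by simp
  have "fs_optimal S f x \<longleftrightarrow> fs_optimal T g x" for x
  proof
    assume "fs_optimal S f x"
    then obtain z where z: "(x, z) \<in> S" "f (x, z) = optval S f" unfolding fs_optimal_def by blast
    then obtain w where w: "(x, w) \<in> T" "g (x, w) \<le> f (x, z)" using d1 fin eq by metis
    have "optval T g \<le> g (x, w)" unfolding optval_def using w(1) by (rule INF_lower)
    hence "g (x, w) = optval T g" using w(2) z(2) eq by simp
    thus "fs_optimal T g x" unfolding fs_optimal_def using w(1) by blast
  next
    assume "fs_optimal T g x"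
    then obtain w where w: "(x, w) \<in> T" "g (x, w) = optval T g" unfolding fs_optimal_def by blast
    then obtain z where z: "(x, z) \<in> S" "f (x, z) \<le> g (x, w)" using d2 by blast
    have "optval S f \<le> f (x, z)" unfolding optval_def using z(1) by (rule INF_lower)
    hence "f (x, z) = optval S f" using w(2) z(2) eq by simp
    thus "fs_optimal S f x" unfolding fs_optimal_def using z(1) by blast
  qed
  thus ?thesis unfolding equivalent_form_def using eq by blast
qed

lemma K1:
  fixes F :: "real^'u^'f" and g :: "real^'f" and E :: "real^'u^'y" and y :: "real^'y"
  assumes ne: "{u. 0 \<le> u \<and> F *v u \<le> g} \<noteq> {}" and bd: "bounded {u. 0 \<le> u \<and> F *v u \<le> g}"
  shows "\<exists>l. 0 \<le> l \<and> transpose E *v y \<le> transpose F *v l \<and>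
           ereal (g \<bullet> l) \<le> (SUP u\<in>{u. 0 \<le> u \<and> F *v u \<le> g}. ereal ((E *v u) \<bullet> y))"
proof -
  define U where "U = {u. 0 \<le> u \<and> F *v u \<le> g}"
  define S where "S = (SUP u\<in>U. ereal ((E *v u) \<bullet> y))"
  have cu: "(transpose E *v y) \<bullet> u = (E *v u) \<bullet> y" for u
    by (metis tr_dot inner_commute)
  obtain R where R: "\<forall>u\<in>U. norm u \<le> R" using bd unfolding U_def bounded_iff by blast
  have ub: "(E *v u) \<bullet> y \<le> norm (transpose E *v y) * R" if "u \<in> U" for u
  proof -
    have "(E *v u) \<bullet> y = (transpose E *v y) \<bullet> u" by (simp add: cu)
    also have "\<dots> \<le> norm (transpose E *v y) * norm u" by (rule norm_cauchy_schwarz)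
    also have "\<dots> \<le> norm (transpose E *v y) * R" using R that by (simp add: mult_left_mono)
    finally show ?thesis .
  qed
  obtain u1 where u1: "u1 \<in> U" using ne unfolding U_def by blast
  have S1: "S \<le> ereal (norm (transpose E *v y) * R)" unfolding S_def
    using ub by (intro SUP_least) simp
  have S2: "ereal ((E *v u1) \<bullet> y) \<le> S" unfolding S_def using u1 by (rule SUP_upper)
  have Sfin: "S = ereal (real_of_ereal S)" using S1 S2 by (cases S) auto
  have bnd: "(transpose E *v y) \<bullet> u \<le> real_of_ereal S" if "0 \<le> u" "F *v u \<le> g" for u
  proof -
    have "ereal ((E *v u) \<bullet> y) \<le> S" unfolding S_def using that by (intro SUP_upper) (simp add: U_def)
    hence "ereal ((E *v u) \<bullet> y) \<le> ereal (real_of_ereal S)" using Sfin by simp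
    thus ?thesis by (simp add: cu)
  qed
  obtain u0 where u0: "0 \<le> u0" "F *v u0 \<le> g" using ne by blast
  obtain l where l: "0 \<le> l" "transpose E *v y \<le> transpose F *v l" "g \<bullet> l \<le> real_of_ereal S"
    using lp_dual[OF u0 bnd] by blast
  have "ereal (g \<bullet> l) \<le> S" using l(3) Sfin by (metis ereal_less_eq(3))
  thus ?thesis using l unfolding S_def U_def by blast
qed

theorem proposition5:
  fixes A :: "real^'x^'a" and b :: "real^'a" and Iint :: "'x set"
    and F :: "real^'x \<Rightarrow> real^'u^'f" and h :: "real^'f" and G :: "real^'x^'f"
    and B1 :: "real^'x^'b" and B2 :: "real^'y^'b" and d :: "real^'b"
    and c1 :: "real^'x" and c2 :: "real^'y" and E :: "real^'u^'y"
  assumes U_nonempty: "\<And>x. x \<in> Xset A b Iint \<Longrightarrow> Uset F h G x \<noteq> {}"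
    and U_bounded: "\<And>x. x \<in> Xset A b Iint \<Longrightarrow> bounded (Uset F h G x)"
    and MIP_finite: "\<exists>r::real. optval {(x, (u, y)). x \<in> Xset A b Iint \<and> u \<in> Uset F h G x \<and> y \<in> Yset B1 B2 d x}
                        (\<lambda>(x, (u, y)). ereal (c1 \<bullet> x + c2hat E c2 u \<bullet> y)) = ereal r"
  shows
    "equivalent_form
       (Xset A b Iint \<times> {()})
       (\<lambda>(x, _). ereal (c1 \<bullet> x) +
          (SUP u\<in>Uset F h G x. INF y\<in>Yset B1 B2 d x. ereal (c2hat E c2 u \<bullet> y)))
       {(x, y). x \<in> Xset A b Iint \<and> y \<in> Yset B1 B2 d x}
       (\<lambda>(x, y). ereal (c1 \<bullet> x + c2 \<bullet> y) + (SUP u\<in>Uset F h G x. ereal ((E *v u) \<bullet> y)))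
     \<and> equivalent_form
       {(x, y). x \<in> Xset A b Iint \<and> y \<in> Yset B1 B2 d x}
       (\<lambda>(x, y). ereal (c1 \<bullet> x + c2 \<bullet> y) + (SUP u\<in>Uset F h G x. ereal ((E *v u) \<bullet> y)))
       {(x, (y, lam)). x \<in> Xset A b Iint \<and> y \<in> Yset B1 B2 d x
          \<and> 0 \<le> transpose (F x) *v lam - transpose E *v y \<and> 0 \<le> lam}
       (\<lambda>(x, (y, lam)). ereal (c1 \<bullet> x + c2 \<bullet> y + (h + G *v x) \<bullet> lam))"
proof -
  let ?X = "Xset A b Iint"
  let ?U = "Uset F h G"
  let ?Y = "Yset B1 B2 d"
  have Ueq: "?U x = {u. 0 \<le> u \<and> F x *v u \<le> h + G *v x}" for x by (simp add: Uset_def)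
  have Ymem: "y \<in> ?Y x \<longleftrightarrow> 0 \<le> y \<and> d - B1 *v x \<le> B2 *v y" for x y by (simp add: Yset_def)
  have vdiff: "0 \<le> a - bb \<longleftrightarrow> bb \<le> a" for a bb :: "real^'u"
    by (simp add: less_eq_vec_def)
  have K1': "\<exists>l. 0 \<le> l \<and> 0 \<le> transpose (F x) *v l - transpose E *v y \<and>
      ereal ((h + G *v x) \<bullet> l) \<le> (SUP u\<in>?U x. ereal ((E *v u) \<bullet> y))" if "x \<in> ?X" for x y
    using K1[OF U_nonempty[OF that, unfolded Ueq] U_bounded[OF that, unfolded Ueq], of E y]
    unfolding Ueq vdiff by blast
  have W: "(SUP u\<in>?U x. ereal ((E *v u) \<bullet> y)) \<le> ereal ((h + G *v x) \<bullet> l)"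
    if "0 \<le> l" "0 \<le> transpose (F x) *v l - transpose E *v y" for x y l
  proof (rule SUP_least)
    fix u assume "u \<in> ?U x"
    hence u: "0 \<le> u" "F x *v u \<le> h + G *v x" by (auto simp: Ueq)
    have "(transpose E *v y) \<bullet> u \<le> (h + G *v x) \<bullet> l"
      using weak_dual[OF u that(1)] that(2) unfolding vdiff by blast
    moreover have "(transpose E *v y) \<bullet> u = (E *v u) \<bullet> y" by (metis tr_dot inner_commute)
    ultimately show "ereal ((E *v u) \<bullet> y) \<le> ereal ((h + G *v x) \<bullet> l)" by simp
  qed
  obtain r where r: "optval {(x, (u, y)). x \<in> ?X \<and> u \<in> ?U x \<and> y \<in> ?Y x}
      (\<lambda>(x, (u, y)). ereal (c1 \<bullet> x + c2hat E c2 u \<bullet> y)) = ereal r" using MIP_finite by blast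
  have rle: "r \<le> c1 \<bullet> x + c2hat E c2 u \<bullet> y" if "x \<in> ?X" "u \<in> ?U x" "y \<in> ?Y x" for x u y
  proof -
    have "optval {(x, (u, y)). x \<in> ?X \<and> u \<in> ?U x \<and> y \<in> ?Y x}
      (\<lambda>(x, (u, y)). ereal (c1 \<bullet> x + c2hat E c2 u \<bullet> y)) \<le> ereal (c1 \<bullet> x + c2hat E c2 u \<bullet> y)"
      unfolding optval_def using that by (intro INF_lower2[of "(x, (u, y))"]) auto
    thus ?thesis using r by simp
  qed
  obtain x0 u0 y0 where x0: "x0 \<in> ?X" "u0 \<in> ?U x0" "y0 \<in> ?Y x0"
  proof -
    have "{(x, (u, y)). x \<in> ?X \<and> u \<in> ?U x \<and> y \<in> ?Y x} \<noteq> {}"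
    proof
      assume emp: "{(x, (u, y)). x \<in> ?X \<and> u \<in> ?U x \<and> y \<in> ?Y x} = {}"
      have "optval {(x, (u, y)). x \<in> ?X \<and> u \<in> ?U x \<and> y \<in> ?Y x}
        (\<lambda>(x, (u, y)). ereal (c1 \<bullet> x + c2hat E c2 u \<bullet> y)) = \<infinity>" unfolding optval_def emp by (simp add: top_ereal_def)
      thus False using r by simp
    qed
    thus ?thesis using that by auto
  qed
  have K2': "\<exists>ys ls u. ys \<in> ?Y x \<and> 0 \<le> ls \<and> 0 \<le> transpose (F x) *v ls - transpose E *v ys \<and> u \<in> ?U x
      \<and> (\<forall>y'\<in>?Y x. c2 \<bullet> ys + (h + G *v x) \<bullet> ls \<le> c2hat E c2 u \<bullet> y')"
    if x: "x \<in> ?X" and yne: "?Y x \<noteq> {}" for x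
  proof -
    obtain y1 where y1: "y1 \<in> ?Y x" using yne by blast
    obtain l1 where l1: "0 \<le> l1" "0 \<le> transpose (F x) *v l1 - transpose E *v y1"
      using K1'[OF x, of y1] by blast
    obtain u1 where u1: "u1 \<in> ?U x" using U_nonempty[OF x] by blast
    have lb: "r - c1 \<bullet> x \<le> c2 \<bullet> y + (h + G *v x) \<bullet> l"
      if "0 \<le> y" "d - B1 *v x \<le> B2 *v y" "0 \<le> l" "transpose E *v y \<le> transpose (F x) *v l" for y l
    proof -
      have yY: "y \<in> ?Y x" using that Ymem by blast
      have u1': "0 \<le> u1" "F x *v u1 \<le> h + G *v x" using u1 by (auto simp: Ueq)
      have "(transpose E *v y) \<bullet> u1 \<le> (h + G *v x) \<bullet> l" using weak_dual[OF u1' that(3,4)] .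
      moreover have "(transpose E *v y) \<bullet> u1 = (E *v u1) \<bullet> y" by (metis tr_dot inner_commute)
      moreover have "c2hat E c2 u1 \<bullet> y = (E *v u1) \<bullet> y + c2 \<bullet> y" by (simp add: c2hat_def inner_add_left)
      ultimately show ?thesis using rle[OF x u1 yY] by linarith
    qed
    have y1': "0 \<le> y1" "d - B1 *v x \<le> B2 *v y1" using y1 Ymem by blast+
    have l1': "transpose E *v y1 \<le> transpose (F x) *v l1" using l1(2) unfolding vdiff .
    obtain ys ls u where
      res: "0 \<le> ys" "d - B1 *v x \<le> B2 *v ys" "0 \<le> ls" "transpose E *v ys \<le> transpose (F x) *v ls"
        "0 \<le> u" "F x *v u \<le> h + G *v x"
        "\<forall>y'. 0 \<le> y' \<longrightarrow> d - B1 *v x \<le> B2 *v y' \<longrightarrow> c2 \<bullet> ys + (h + G *v x) \<bullet> ls \<le> (E *v u + c2) \<bullet> y'"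
      using K2[OF y1' l1(1) l1' lb] by blast
    show ?thesis
      using res unfolding vdiff by (intro exI[of _ ys] exI[of _ ls] exI[of _ u]) (auto simp: Ymem Ueq c2hat_def)
  qed
  obtain l0 where l0: "0 \<le> l0" "0 \<le> transpose (F x0) *v l0 - transpose E *v y0"
    "ereal ((h + G *v x0) \<bullet> l0) \<le> (SUP u\<in>?U x0. ereal ((E *v u) \<bullet> y0))"
    using K1'[OF x0(1), of y0] by blast
  have fin1: "optval {(x, y). x \<in> ?X \<and> y \<in> ?Y x}
       (\<lambda>(x, y). ereal (c1 \<bullet> x + c2 \<bullet> y) + (SUP u\<in>?U x. ereal ((E *v u) \<bullet> y))) \<noteq> \<infinity>"
  proof -
    have "optval {(x, y). x \<in> ?X \<and> y \<in> ?Y x}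
       (\<lambda>(x, y). ereal (c1 \<bullet> x + c2 \<bullet> y) + (SUP u\<in>?U x. ereal ((E *v u) \<bullet> y)))
       \<le> ereal (c1 \<bullet> x0 + c2 \<bullet> y0) + (SUP u\<in>?U x0. ereal ((E *v u) \<bullet> y0))"
      unfolding optval_def using x0 by (intro INF_lower2[of "(x0, y0)"]) auto
    also have "\<dots> \<le> ereal (c1 \<bullet> x0 + c2 \<bullet> y0) + ereal ((h + G *v x0) \<bullet> l0)"
      using W[OF l0(1,2)] by (rule add_left_mono)
    finally show ?thesis by auto
  qed
  have fin2: "optval {(x, (y, lam)). x \<in> ?X \<and> y \<in> ?Y x
          \<and> 0 \<le> transpose (F x) *v lam - transpose E *v y \<and> 0 \<le> lam}
       (\<lambda>(x, (y, lam)). ereal (c1 \<bullet> x + c2 \<bullet> y + (h + G *v x) \<bullet> lam)) \<noteq> \<infinity>"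
  proof -
    have "optval {(x, (y, lam)). x \<in> ?X \<and> y \<in> ?Y x
          \<and> 0 \<le> transpose (F x) *v lam - transpose E *v y \<and> 0 \<le> lam}
       (\<lambda>(x, (y, lam)). ereal (c1 \<bullet> x + c2 \<bullet> y + (h + G *v x) \<bullet> lam))
       \<le> ereal (c1 \<bullet> x0 + c2 \<bullet> y0 + (h + G *v x0) \<bullet> l0)"
      unfolding optval_def using x0 l0 by (intro INF_lower2[of "(x0, (y0, l0))"]) auto
    thus ?thesis by auto
  qed
  show ?thesis
  proof
    show "equivalent_form
       (?X \<times> {()})
       (\<lambda>(x, _). ereal (c1 \<bullet> x) +
          (SUP u\<in>?U x. INF y\<in>?Y x. ereal (c2hat E c2 u \<bullet> y)))
       {(x, y). x \<in> ?X \<and> y \<in> ?Y x}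
       (\<lambda>(x, y). ereal (c1 \<bullet> x + c2 \<bullet> y) + (SUP u\<in>?U x. ereal ((E *v u) \<bullet> y)))"
    proof (rule equiv_lemma[OF fin1])
      fix x and z :: unit
      assume xz: "(x, z) \<in> ?X \<times> {()}"
        and nf: "(\<lambda>(x, _). ereal (c1 \<bullet> x) + (SUP u\<in>?U x. INF y\<in>?Y x. ereal (c2hat E c2 u \<bullet> y))) (x, z) \<noteq> \<infinity>"
      have x: "x \<in> ?X" using xz by blast
      have yne: "?Y x \<noteq> {}"
      proof
        assume "?Y x = {}"
        hence "(SUP u\<in>?U x. INF y\<in>?Y x. ereal (c2hat E c2 u \<bullet> y)) = \<infinity>"
          using U_nonempty[OF x] by (simp add: SUP_constant top_ereal_def)
        thus False using nf by simp
      qed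
      obtain ys ls u where ys: "ys \<in> ?Y x" "0 \<le> ls" "0 \<le> transpose (F x) *v ls - transpose E *v ys" "u \<in> ?U x"
        "\<forall>y'\<in>?Y x. c2 \<bullet> ys + (h + G *v x) \<bullet> ls \<le> c2hat E c2 u \<bullet> y'"
        using K2'[OF x yne] by blast
      have "ereal (c1 \<bullet> x + c2 \<bullet> ys) + (SUP u\<in>?U x. ereal ((E *v u) \<bullet> ys))
          \<le> ereal (c1 \<bullet> x + c2 \<bullet> ys) + ereal ((h + G *v x) \<bullet> ls)"
        using W[OF ys(2,3)] by (rule add_left_mono)
      also have "\<dots> = ereal (c1 \<bullet> x) + ereal (c2 \<bullet> ys + (h + G *v x) \<bullet> ls)" by simp
      also have "\<dots> \<le> ereal (c1 \<bullet> x) + (INF y\<in>?Y x. ereal (c2hat E c2 u \<bullet> y))"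
        using ys(5) by (intro add_left_mono INF_greatest) simp
      also have "\<dots> \<le> ereal (c1 \<bullet> x) + (SUP u\<in>?U x. INF y\<in>?Y x. ereal (c2hat E c2 u \<bullet> y))"
        using ys(4) by (intro add_left_mono SUP_upper)
      finally show "\<exists>w. (x, w) \<in> {(x, y). x \<in> ?X \<and> y \<in> ?Y x} \<and>
           (\<lambda>(x, y). ereal (c1 \<bullet> x + c2 \<bullet> y) + (SUP u\<in>?U x. ereal ((E *v u) \<bullet> y))) (x, w)
           \<le> (\<lambda>(x, _). ereal (c1 \<bullet> x) + (SUP u\<in>?U x. INF y\<in>?Y x. ereal (c2hat E c2 u \<bullet> y))) (x, z)"
        using x ys(1) by auto
    next
      fix x y assume xy: "(x, y) \<in> {(x, y). x \<in> ?X \<and> y \<in> ?Y x}"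
      have "(SUP u\<in>?U x. INF y\<in>?Y x. ereal (c2hat E c2 u \<bullet> y)) \<le> (SUP u\<in>?U x. ereal (c2hat E c2 u \<bullet> y))"
        using xy by (intro SUP_mono') (auto intro: INF_lower)
      also have "\<dots> \<le> ereal (c2 \<bullet> y) + (SUP u\<in>?U x. ereal ((E *v u) \<bullet> y))"
      proof (rule SUP_least)
        fix u assume "u \<in> ?U x"
        hence "ereal ((E *v u) \<bullet> y) \<le> (SUP u\<in>?U x. ereal ((E *v u) \<bullet> y))" by (rule SUP_upper)
        hence "ereal (c2 \<bullet> y) + ereal ((E *v u) \<bullet> y) \<le> ereal (c2 \<bullet> y) + (SUP u\<in>?U x. ereal ((E *v u) \<bullet> y))"
          by (rule add_left_mono)
        thus "ereal (c2hat E c2 u \<bullet> y) \<le> ereal (c2 \<bullet> y) + (SUP u\<in>?U x. ereal ((E *v u) \<bullet> y))"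
          by (simp add: c2hat_def inner_add_left add.commute)
      qed
      finally have "ereal (c1 \<bullet> x) + (SUP u\<in>?U x. INF y\<in>?Y x. ereal (c2hat E c2 u \<bullet> y))
          \<le> ereal (c1 \<bullet> x) + (ereal (c2 \<bullet> y) + (SUP u\<in>?U x. ereal ((E *v u) \<bullet> y)))"
        by (rule add_left_mono)
      also have "\<dots> = ereal (c1 \<bullet> x + c2 \<bullet> y) + (SUP u\<in>?U x. ereal ((E *v u) \<bullet> y))"
        by (simp add: add.assoc[symmetric])
      finally show "\<exists>z. (x, z) \<in> ?X \<times> {()} \<and>
          (\<lambda>(x, _). ereal (c1 \<bullet> x) + (SUP u\<in>?U x. INF y\<in>?Y x. ereal (c2hat E c2 u \<bullet> y))) (x, z)
          \<le> (\<lambda>(x, y). ereal (c1 \<bullet> x + c2 \<bullet> y) + (SUP u\<in>?U x. ereal ((E *v u) \<bullet> y))) (x, y)"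
        using xy by auto
    qed
  next
    show "equivalent_form
       {(x, y). x \<in> ?X \<and> y \<in> ?Y x}
       (\<lambda>(x, y). ereal (c1 \<bullet> x + c2 \<bullet> y) + (SUP u\<in>?U x. ereal ((E *v u) \<bullet> y)))
       {(x, (y, lam)). x \<in> ?X \<and> y \<in> ?Y x
          \<and> 0 \<le> transpose (F x) *v lam - transpose E *v y \<and> 0 \<le> lam}
       (\<lambda>(x, (y, lam)). ereal (c1 \<bullet> x + c2 \<bullet> y + (h + G *v x) \<bullet> lam))"
    proof (rule equiv_lemma[OF fin2])
      fix x y assume xy: "(x, y) \<in> {(x, y). x \<in> ?X \<and> y \<in> ?Y x}"
      obtain l where l: "0 \<le> l" "0 \<le> transpose (F x) *v l - transpose E *v y"
        "ereal ((h + G *v x) \<bullet> l) \<le> (SUP u\<in>?U x. ereal ((E *v u) \<bullet> y))"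
        using K1'[of x y] xy by blast
      have "ereal (c1 \<bullet> x + c2 \<bullet> y + (h + G *v x) \<bullet> l)
          = ereal (c1 \<bullet> x + c2 \<bullet> y) + ereal ((h + G *v x) \<bullet> l)" by simp
      also have "\<dots> \<le> ereal (c1 \<bullet> x + c2 \<bullet> y) + (SUP u\<in>?U x. ereal ((E *v u) \<bullet> y))"
        using l(3) by (rule add_left_mono)
      finally show "\<exists>w. (x, w) \<in> {(x, (y, lam)). x \<in> ?X \<and> y \<in> ?Y x
          \<and> 0 \<le> transpose (F x) *v lam - transpose E *v y \<and> 0 \<le> lam} \<and>
          (\<lambda>(x, (y, lam)). ereal (c1 \<bullet> x + c2 \<bullet> y + (h + G *v x) \<bullet> lam)) (x, w)
          \<le> (\<lambda>(x, y). ereal (c1 \<bullet> x + c2 \<bullet> y) + (SUP u\<in>?U x. ereal ((E *v u) \<bullet> y))) (x, y)"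
        using xy l by (intro exI[of _ "(y, l)"]) auto
    next
      fix x w assume xw: "(x, w) \<in> {(x, (y, lam)). x \<in> ?X \<and> y \<in> ?Y x
          \<and> 0 \<le> transpose (F x) *v lam - transpose E *v y \<and> 0 \<le> lam}"
      obtain y l where w: "w = (y, l)" by (cases w)
      have yl: "x \<in> ?X" "y \<in> ?Y x" "0 \<le> transpose (F x) *v l - transpose E *v y" "0 \<le> l"
        using xw unfolding w by auto
      have "ereal (c1 \<bullet> x + c2 \<bullet> y) + (SUP u\<in>?U x. ereal ((E *v u) \<bullet> y))
          \<le> ereal (c1 \<bullet> x + c2 \<bullet> y) + ereal ((h + G *v x) \<bullet> l)"
        using W[OF yl(4,3)] by (rule add_left_mono)
      also have "\<dots> = ereal (c1 \<bullet> x + c2 \<bullet> y + (h + G *v x) \<bullet> l)" by simp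
      finally show "\<exists>z. (x, z) \<in> {(x, y). x \<in> ?X \<and> y \<in> ?Y x} \<and>
          (\<lambda>(x, y). ereal (c1 \<bullet> x + c2 \<bullet> y) + (SUP u\<in>?U x. ereal ((E *v u) \<bullet> y))) (x, z)
          \<le> (\<lambda>(x, (y, lam)). ereal (c1 \<bullet> x + c2 \<bullet> y + (h + G *v x) \<bullet> lam)) (x, w)"
        using yl unfolding w by (intro exI[of _ y]) auto
    qed
  qed
qed

end
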